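(* Let $\mathcal{M}_1$, $\mathcal{M}_2$ and $f$ be real-valued random variables with finite, strictly positive variances, and assume $\mathrm{Cov}[\mathcal{M}_1,f]\neq 0$ and $\mathrm{Cov}[\mathcal{M}_2,f]\neq 0$. Suppose $$\mathrm{Cov}[\mathcal{M}_1,\mathcal{M}_2]\neq \frac{\mathrm{Cov}[\mathcal{M}_2,f]\,\mathrm{Var}[\mathcal{M}_1]}{\mathrm{Cov}[\mathcal{M}_1,f]}\quad\text{and}\quad \mathrm{Cov}[\mathcal{M}_1,\mathcal{M}_2]\neq \frac{\mathrm{Cov}[\mathcal{M}_1,f]\,\mathrm{Var}[\mathcal{M}_2]}{\mathrm{Cov}[\mathcal{M}_2,f]}.$$ Then there exist $w_1,w_2\in\mathbb{R}$ such that $$\rho_{\mathrm{Pearson}}(w_1\mathcal{M}_1+w_2\mathcal{M}_2,\,f)>\max\big(\rho_{\mathrm{Pearson}}(\mathcal{M}_1,f),\,\rho_{\mathrm{Pearson}}(\mathcal{M}_2,f)\big).$$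
   Context: $\mathrm{Cov}[X,Y]$ and $\mathrm{Var}[X]$ denote covariance and variance, and $\rho_{\mathrm{Pearson}}(X,Y)=\mathrm{Cov}[X,Y]/\sqrt{\mathrm{Var}[X]\mathrm{Var}[Y]}$ is Pearson's correlation coefficient (defined whenever both variances are positive). In the paper's setting $\mathcal{M}_1,\mathcal{M}_2$ are two estimation metrics and $f$ the objective evaluation metric, viewed as functions on a finite set of neural architectures (i.e., random variables under the uniform distribution on that set). *)

theory Defs
  imports "HOL-Probability.Probability"
begin

definition cov :: "'a measure \<Rightarrow> ('a \<Rightarrow> real) \<Rightarrow> ('a \<Rightarrow> real) \<Rightarrow> real" where
  "cov M X Y = (\<integral>x. (X x - (\<integral>y. X y \<partial>M)) * (Y x - (\<integral>y. Y y \<partial>M)) \<partial>M)"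

definition var :: "'a measure \<Rightarrow> ('a \<Rightarrow> real) \<Rightarrow> real" where
  "var M X = (\<integral>x. (X x - (\<integral>y. X y \<partial>M))\<^sup>2 \<partial>M)"

definition pearson :: "'a measure \<Rightarrow> ('a \<Rightarrow> real) \<Rightarrow> ('a \<Rightarrow> real) \<Rightarrow> real" where
  "pearson M X Y = cov M X Y / sqrt (var M X * var M Y)"

end

theory Submission imports Defs begin


lemma cmp:
  fixes p N A D :: real
  assumes "0 < N" "0 < D" "0 < A" "p\<^sup>2 * D < N\<^sup>2 * A"
  shows "p / sqrt A < N / sqrt D"
proof (cases "p \<le> 0")
  case True
  then have "p / sqrt A \<le> 0" using assms by (simp add: divide_nonpos_pos)
  moreover have "0 < N / sqrt D" using assms by simp
  ultimately show ?thesis by linarith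
next
  case False
  have "sqrt (p\<^sup>2 * D) < sqrt (N\<^sup>2 * A)" using assms(4) by simp
  then have "p * sqrt D < N * sqrt A" using False assms by (simp add: real_sqrt_mult)
  then show ?thesis using assms by (simp add: divide_less_eq less_divide_eq mult.commute)
qed

lemma alg:
  fixes a b c p q w1 w2 :: real
  assumes "w1 = b * p - c * q" "w2 = a * q - c * p"
  shows "w1 * p + w2 * q = b*p\<^sup>2 - 2*c*p*q + a*q\<^sup>2"
    "w1\<^sup>2 * a + 2 * w1 * w2 * c + w2\<^sup>2 * b = (a*b - c\<^sup>2) * (b*p\<^sup>2 - 2*c*p*q + a*q\<^sup>2)"
    "a * (b*p\<^sup>2 - 2*c*p*q + a*q\<^sup>2) = (a*q - c*p)\<^sup>2 + p\<^sup>2 * (a*b - c\<^sup>2)"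
    "b * (b*p\<^sup>2 - 2*c*p*q + a*q\<^sup>2) = (b*p - c*q)\<^sup>2 + q\<^sup>2 * (a*b - c\<^sup>2)"
  unfolding assms by (simp_all add: power2_eq_square algebra_simps)

definition L2 :: "'a measure \<Rightarrow> ('a \<Rightarrow> real) \<Rightarrow> bool" where "L2 M X \<longleftrightarrow> X \<in> borel_measurable M \<and> integrable M (\<lambda>x. (X x)\<^sup>2)"

lemma L2_prod:
  assumes "L2 M X" "L2 M Y"
  shows "integrable M (\<lambda>x. X x * Y x)"
proof -
  have i: "integrable M (\<lambda>x. (X x)\<^sup>2 + (Y x)\<^sup>2)" using assms unfolding L2_def by auto
  have m: "(\<lambda>x. X x * Y x) \<in> borel_measurable M" using assms unfolding L2_def by (auto intro: borel_measurable_times)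
  have "AE x in M. norm (X x * Y x) \<le> norm ((X x)\<^sup>2 + (Y x)\<^sup>2)"
  proof (rule AE_I2)
    fix x
    have h: "0 \<le> (\<bar>X x\<bar> - \<bar>Y x\<bar>)\<^sup>2" by simp
    have "(\<bar>X x\<bar> - \<bar>Y x\<bar>)\<^sup>2 = (X x)\<^sup>2 + (Y x)\<^sup>2 - 2 * \<bar>X x * Y x\<bar>"
      by (simp add: power2_diff abs_mult)
    then have "\<bar>X x * Y x\<bar> \<le> (X x)\<^sup>2 + (Y x)\<^sup>2" using h by simp
    then show "norm (X x * Y x) \<le> norm ((X x)\<^sup>2 + (Y x)\<^sup>2)" by simp
  qed
  then show ?thesis by (rule Bochner_Integration.integrable_bound[OF i m])
qed

context prob_space begin

lemma L2_int:
  assumes "L2 M X" shows "integrable M X"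
proof -
  have m: "X \<in> borel_measurable M" and i: "integrable M (\<lambda>x. (X x)\<^sup>2)"
    using assms unfolding L2_def by auto
  show ?thesis by (rule square_integrable_imp_integrable[OF m i])
qed

lemma L2_lin:
  assumes "L2 M X" "L2 M Y"
  shows "L2 M (\<lambda>x. s * X x + t * Y x)"
proof -
  have i: "integrable M (\<lambda>x. s\<^sup>2 * (X x)\<^sup>2 + t\<^sup>2 * (Y x)\<^sup>2 + (2 * s * t) * (X x * Y x))"
    using assms L2_prod[OF assms] unfolding L2_def by (intro Bochner_Integration.integrable_add Bochner_Integration.integrable_mult_right) auto
  have e: "(\<lambda>x. s\<^sup>2 * (X x)\<^sup>2 + t\<^sup>2 * (Y x)\<^sup>2 + (2 * s * t) * (X x * Y x)) = (\<lambda>x. (s * X x + t * Y x)\<^sup>2)"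
    by (rule ext) (simp add: power2_sum power_mult_distrib mult_ac)
  have m: "(\<lambda>x. s * X x + t * Y x) \<in> borel_measurable M" using assms unfolding L2_def by (intro borel_measurable_add borel_measurable_times borel_measurable_const) auto
  show ?thesis using i m unfolding e L2_def by blast
qed

lemma cov_formula:
  assumes "L2 M X" "L2 M Y"
  shows "cov M X Y = expectation (\<lambda>x. X x * Y x) - expectation X * expectation Y"
proof -
  let ?a = "expectation X" and ?b = "expectation Y"
  have e: "(\<lambda>x. (X x - ?a) * (Y x - ?b)) = (\<lambda>x. X x * Y x - ?b * X x - ?a * Y x + ?a * ?b)"
    by (rule ext) (simp add: algebra_simps)
  have "expectation (\<lambda>x. X x * Y x - ?b * X x - ?a * Y x + ?a * ?b)
     = expectation (\<lambda>x. X x * Y x - ?b * X x - ?a * Y x) + ?a * ?b"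
    using L2_prod[OF assms] L2_int[OF assms(1)] L2_int[OF assms(2)] by (subst Bochner_Integration.integral_add) (auto simp: prob_space)
  also have "\<dots> = expectation (\<lambda>x. X x * Y x) - ?b * ?a - ?a * ?b + ?a * ?b"
    using L2_prod[OF assms] L2_int[OF assms(1)] L2_int[OF assms(2)] by simp
  finally show ?thesis unfolding cov_def e by simp
qed

lemma var_cov: "var M X = cov M X X"
  unfolding var_def cov_def by (simp add: power2_eq_square)

lemma cov_sym: "cov M X Y = cov M Y X"
  unfolding cov_def by (simp add: mult.commute)

lemma cov_lin:
  assumes "L2 M X" "L2 M Y" "L2 M Z"
  shows "cov M (\<lambda>x. s * X x + t * Y x) Z = s * cov M X Z + t * cov M Y Z"
proof -
  have e1: "expectation (\<lambda>x. s * X x + t * Y x) = s * expectation X + t * expectation Y"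
    using L2_int[OF assms(1)] L2_int[OF assms(2)] by simp
  have e2: "expectation (\<lambda>x. (s * X x + t * Y x) * Z x) = s * expectation (\<lambda>x. X x * Z x) + t * expectation (\<lambda>x. Y x * Z x)"
  proof -
    have "(\<lambda>x. (s * X x + t * Y x) * Z x) = (\<lambda>x. s * (X x * Z x) + t * (Y x * Z x))"
      by (auto simp: algebra_simps)
    then show ?thesis using L2_prod[OF assms(1,3)] L2_prod[OF assms(2,3)] by simp
  qed
  have "cov M (\<lambda>x. s * X x + t * Y x) Z = expectation (\<lambda>x. (s * X x + t * Y x) * Z x) - expectation (\<lambda>x. s * X x + t * Y x) * expectation Z"
    by (rule cov_formula[OF L2_lin[OF assms(1,2)] assms(3)])
  also have "\<dots> = s * expectation (\<lambda>x. X x * Z x) + t * expectation (\<lambda>x. Y x * Z x) - (s * expectation X + t * expectation Y) * expectation Z"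
    unfolding e1 e2 ..
  finally show ?thesis
    unfolding cov_formula[OF assms(1,3)] cov_formula[OF assms(2,3)]
    by (simp add: ring_distribs)
qed

lemma var_lin:
  assumes "L2 M X" "L2 M Y"
  shows "var M (\<lambda>x. s * X x + t * Y x) = s\<^sup>2 * var M X + 2 * s * t * cov M X Y + t\<^sup>2 * var M Y"
proof -
  have L: "L2 M (\<lambda>x. s * X x + t * Y x)" using L2_lin[OF assms] .
  have "var M (\<lambda>x. s * X x + t * Y x) = s * cov M X (\<lambda>x. s * X x + t * Y x) + t * cov M Y (\<lambda>x. s * X x + t * Y x)"
    unfolding var_cov using cov_lin[OF assms L] .
  also have "\<dots> = s * (s * cov M X X + t * cov M Y X) + t * (s * cov M X Y + t * cov M Y Y)"
    using cov_lin[OF assms assms(1)] cov_lin[OF assms assms(2)] cov_sym by metis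
  finally show ?thesis unfolding var_cov using cov_sym[of X Y] by (simp add: power2_eq_square algebra_simps)
qed

lemma var_nonneg: "var M X \<ge> 0"
  unfolding var_def by (rule integral_nonneg_AE) auto

lemma cov_CS:
  assumes "L2 M X" "L2 M Y" "var M X > 0"
  shows "(cov M X Y)\<^sup>2 \<le> var M X * var M Y"
proof -
  define a where "a = var M X"
  define c where "c = cov M X Y"
  have "0 \<le> var M (\<lambda>x. (- c / a) * X x + 1 * Y x)" by (rule var_nonneg)
  also have "\<dots> = (c/a)\<^sup>2 * a - 2 * (c/a) * c + var M Y"
    using var_lin[OF assms(1,2), of "- c / a" 1] unfolding a_def c_def by (simp add: power2_eq_square)
  also have "\<dots> = var M Y - c\<^sup>2 / a" using assms(3) unfolding a_def
    by (simp add: power2_eq_square field_simps)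
  finally have "c\<^sup>2 / a \<le> var M Y" by simp
  then have "c\<^sup>2 \<le> var M Y * a" using assms(3) unfolding a_def by (simp add: pos_divide_le_eq)
  then show ?thesis unfolding a_def c_def by (metis mult.commute)
qed

end


theorem proposition1:
  fixes M :: "'a measure" and M1 M2 f :: "'a \<Rightarrow> real"
  assumes "prob_space M"
    and "M1 \<in> borel_measurable M" and "M2 \<in> borel_measurable M" and "f \<in> borel_measurable M"
    and "integrable M (\<lambda>x. (M1 x)\<^sup>2)" and "integrable M (\<lambda>x. (M2 x)\<^sup>2)"
    and "integrable M (\<lambda>x. (f x)\<^sup>2)"
    and "var M M1 > 0" and "var M M2 > 0" and "var M f > 0"
    and "cov M M1 f \<noteq> 0" and "cov M M2 f \<noteq> 0"
    and "cov M M1 M2 \<noteq> cov M M2 f * var M M1 / cov M M1 f"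
    and "cov M M1 M2 \<noteq> cov M M1 f * var M M2 / cov M M2 f"
  shows "\<exists>w1 w2 :: real.
           pearson M (\<lambda>x. w1 * M1 x + w2 * M2 x) f
             > max (pearson M M1 f) (pearson M M2 f)"
  

proof -
  interpret prob_space M by fact
  have L1: "L2 M M1" and L2': "L2 M M2" and Lf: "L2 M f" using assms unfolding L2_def by auto
  define a where "a = var M M1"
  define b where "b = var M M2"
  define c where "c = cov M M1 M2"
  define p where "p = cov M M1 f"
  define q where "q = cov M M2 f"
  define v where "v = var M f"
  have a0: "a > 0" and b0: "b > 0" and v0: "v > 0" and p0: "p \<noteq> 0" and q0: "q \<noteq> 0"
    using assms unfolding a_def b_def v_def p_def q_def by auto
  have n1: "a * q - c * p \<noteq> 0"
  proof
    assume "a * q - c * p = 0"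
    then have "c = q * a / p" using p0 by (simp add: field_simps)
    then show False using assms(13) unfolding c_def q_def a_def p_def by simp
  qed
  have n2: "b * p - c * q \<noteq> 0"
  proof
    assume "b * p - c * q = 0"
    then have "c = p * b / q" using q0 by (simp add: field_simps)
    then show False using assms(14) unfolding c_def q_def b_def p_def by simp
  qed
  have det: "a * b - c\<^sup>2 > 0"
  proof -
    have ge: "c\<^sup>2 \<le> a * b" using cov_CS[OF L1 L2'] assms(8) unfolding a_def b_def c_def by simp
    have "a * b - c\<^sup>2 \<noteq> 0"
    proof
      assume eq: "a * b - c\<^sup>2 = 0"
      define Y where "Y = (\<lambda>x. c * M1 x + (- a) * M2 x)"
      have LY: "L2 M Y" unfolding Y_def by (rule L2_lin[OF L1 L2'])
      have "var M Y = c\<^sup>2 * a + 2 * c * (-a) * c + (-a)\<^sup>2 * b"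
        unfolding Y_def using var_lin[OF L1 L2', of c "-a"] unfolding a_def b_def c_def by simp
      also have "\<dots> = a * (a * b - c\<^sup>2)" by (simp add: power2_eq_square algebra_simps)
      finally have vY: "var M Y = 0" using eq by simp
      have cY: "cov M Y f = c * p - a * q"
        unfolding Y_def cov_lin[OF L1 L2' Lf] p_def q_def by simp
      have "(cov M f Y)\<^sup>2 \<le> var M f * var M Y" by (rule cov_CS[OF Lf LY assms(10)])
      then have "(c * p - a * q)\<^sup>2 \<le> 0" using vY cY cov_sym[of f Y] by simp
      then have "c * p - a * q = 0" by simp
      then show False using n1 by simp
    qed
    then show ?thesis using ge by simp
  qed
  define w1 where "w1 = b * p - c * q"
  define w2 where "w2 = a * q - c * p"
  define N where "N = b*p\<^sup>2 - 2*c*p*q + a*q\<^sup>2"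
  note A = alg[OF w1_def w2_def]
  have aN: "a * N = (a*q - c*p)\<^sup>2 + p\<^sup>2 * (a*b - c\<^sup>2)" using A(3) unfolding N_def .
  have bN: "b * N = (b*p - c*q)\<^sup>2 + q\<^sup>2 * (a*b - c\<^sup>2)" using A(4) unfolding N_def .
  have sq1: "(a*q - c*p)\<^sup>2 > 0" using n1 by simp
  have sq2: "(b*p - c*q)\<^sup>2 > 0" using n2 by simp
  have N0: "N > 0"
  proof -
    have "a * N > 0" using aN sq1 det by (simp add: add_pos_nonneg)
    then show ?thesis using a0 by (simp add: zero_less_mult_iff)
  qed
  let ?X = "\<lambda>x. w1 * M1 x + w2 * M2 x"
  have cX: "cov M ?X f = N"
    using cov_lin[OF L1 L2' Lf] A(1) unfolding N_def p_def q_def by simp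
  have vX: "var M ?X = (a * b - c\<^sup>2) * N"
    using var_lin[OF L1 L2'] A(2) unfolding N_def a_def b_def c_def by simp
  have pX: "pearson M ?X f = N / sqrt ((a * b - c\<^sup>2) * N * v)"
    unfolding pearson_def cX vX v_def ..
  have D0: "0 < (a * b - c\<^sup>2) * N * v" using det N0 v0 by simp
  have g1: "pearson M M1 f < pearson M ?X f"
  proof -
    have "p\<^sup>2 * (a * b - c\<^sup>2) < a * N" using aN sq1 by simp
    then have "p\<^sup>2 * (a * b - c\<^sup>2) * (N * v) < a * N * (N * v)"
      using N0 v0 by (intro mult_strict_right_mono) auto
    then have "p\<^sup>2 * ((a * b - c\<^sup>2) * N * v) < N\<^sup>2 * (a * v)"
      by (simp add: power2_eq_square algebra_simps)
    then have "p / sqrt (a * v) < N / sqrt ((a * b - c\<^sup>2) * N * v)"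
      using cmp N0 D0 a0 v0 by simp
    moreover have "pearson M M1 f = p / sqrt (a * v)" unfolding pearson_def p_def a_def v_def ..
    ultimately show ?thesis unfolding pX by simp
  qed
  have g2: "pearson M M2 f < pearson M ?X f"
  proof -
    have "q\<^sup>2 * (a * b - c\<^sup>2) < b * N" using bN sq2 by simp
    then have "q\<^sup>2 * (a * b - c\<^sup>2) * (N * v) < b * N * (N * v)"
      using N0 v0 by (intro mult_strict_right_mono) auto
    then have "q\<^sup>2 * ((a * b - c\<^sup>2) * N * v) < N\<^sup>2 * (b * v)"
      by (simp add: power2_eq_square algebra_simps)
    then have "q / sqrt (b * v) < N / sqrt ((a * b - c\<^sup>2) * N * v)"
      using cmp N0 D0 b0 v0 by simp
    moreover have "pearson M M2 f = q / sqrt (b * v)" unfolding pearson_def q_def b_def v_def ..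
    ultimately show ?thesis unfolding pX by simp
  qed
  show ?thesis using g1 g2 by auto
qed

end
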